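(* For $\vec x,\vec y,\vec z,\vec u,\vec v,\vec w\in\Lambda_G$ the following hold in $\kappa G^\#$: (i) $([\vec y,\vec z]\cdot\vec w)(\vec x\cdot\vec u)-([\vec x,\vec z]\cdot\vec w)(\vec y\cdot\vec u)+([\vec x,\vec y]\cdot\vec w)(\vec z\cdot\vec u)-([\vec x,\vec y]\cdot\vec z)(\vec w\cdot\vec u)=0$; (ii) $([\vec x,\vec y]\cdot\vec z)([\vec u,\vec v]\cdot\vec w)=\det\begin{pmatrix}\vec x\cdot\vec u&\vec x\cdot\vec v&\vec x\cdot\vec w\\ \vec y\cdot\vec u&\vec y\cdot\vec v&\vec y\cdot\vec w\\ \vec z\cdot\vec u&\vec z\cdot\vec v&\vec z\cdot\vec w\end{pmatrix}$.
   Context: Let $\kappa$ be a field of characteristic $0$ and $G$ a group. Let $*:\kappa G\to\kappa G$ be the $\kappa$-linear map with $g^*=g^{-1}$, $(\kappa G)^*$ its fixed points, and $A_G$ the quotient of $\kappa G$ by the two-sided ideal generated by all $ab-ba$, $a\in\kappa G$, $b\in(\kappa G)^*$; $*$ descends to $A_G$. Let $\kappa G^\#=\{x\in A_G:x^*=x\}$ (a commutative subring of the centre of $A_G$) and $\Lambda_G=\{x\in A_G:x^*=-x\}$. For $\vec x,\vec y\in\Lambda_G$ define $\vec x\cdot\vec y=-\tfrac12(\vec x\vec y+\vec y\vec x)\in\kappa G^\#$ and $[\vec x,\vec y]=\tfrac12(\vec x\vec y-\vec y\vec x)\in\Lambda_G$. *)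

theory Defs
  imports "HOL-Library.Poly_Mapping"
begin

text \<open>Group algebra \<kappa>G: the group G is a type of class group_add (group operation
 written additively, so g^{-1} is -g and the unit is 0; commutativity is NOT assumed);
 \<kappa>G is the ring of finitely supported functions G \<Rightarrow> \<kappa>, whose
 multiplication is convolution (the group-algebra product).\<close>

type_synonym ('g, 'k) group_alg = "'g \<Rightarrow>\<^sub>0 'k"

lift_definition gstar :: "('g::group_add, 'k::zero) group_alg \<Rightarrow> ('g, 'k) group_alg"
  is "\<lambda>f g. f (- g)"
proof -
  fix f :: "'g \<Rightarrow> 'k" assume "finite {x. f x \<noteq> 0}"
  hence "finite (uminus ` {x. f x \<noteq> 0})" by simp
  moreover have "{x. f (- x) \<noteq> 0} = uminus ` {x. f x \<noteq> 0}"
    by (auto intro: image_eqI[of _ uminus "- _"])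
  ultimately show "finite {x. f (- x) \<noteq> 0}" by simp
qed

inductive_set sym_comm_ideal :: "('g::group_add, 'k::field) group_alg set" where
  gen: "gstar b = b \<Longrightarrow> a * b - b * a \<in> sym_comm_ideal"
| zero: "0 \<in> sym_comm_ideal"
| add: "x \<in> sym_comm_ideal \<Longrightarrow> y \<in> sym_comm_ideal \<Longrightarrow> x + y \<in> sym_comm_ideal"
| lmult: "y \<in> sym_comm_ideal \<Longrightarrow> r * y \<in> sym_comm_ideal"
| rmult: "y \<in> sym_comm_ideal \<Longrightarrow> y * r \<in> sym_comm_ideal"

text \<open>A_G = \<kappa>G / sym_comm_ideal; we work with representatives:
 congruence modulo the ideal is equality in A_G.\<close>
definition AG_eq :: "('g::group_add, 'k::field) group_alg \<Rightarrow> ('g, 'k) group_alg \<Rightarrow> bool" where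
  "AG_eq a b \<longleftrightarrow> a - b \<in> sym_comm_ideal"

definition in_Lambda :: "('g::group_add, 'k::field) group_alg \<Rightarrow> bool" where
  "in_Lambda x \<longleftrightarrow> AG_eq (gstar x) (- x)"

definition half :: "('g::group_add, 'k::field) group_alg" where
  "half = Poly_Mapping.single 0 (1 / 2)"

definition gdot :: "('g::group_add, 'k::field) group_alg \<Rightarrow> ('g, 'k) group_alg \<Rightarrow> ('g, 'k) group_alg" where
  "gdot x y = - (half * (x * y + y * x))"

definition gbr :: "('g::group_add, 'k::field) group_alg \<Rightarrow> ('g, 'k) group_alg \<Rightarrow> ('g, 'k) group_alg" where
  "gbr x y = half * (x * y - y * x)"

definition det3 :: "'a::ring \<Rightarrow> 'a \<Rightarrow> 'a \<Rightarrow> 'a \<Rightarrow> 'a \<Rightarrow> 'a \<Rightarrow> 'a \<Rightarrow> 'a \<Rightarrow> 'a \<Rightarrow> 'a" where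
  "det3 a11 a12 a13 a21 a22 a23 a31 a32 a33 =
     a11 * a22 * a33 + a12 * a23 * a31 + a13 * a21 * a32
   - a13 * a22 * a31 - a12 * a21 * a33 - a11 * a23 * a32"

end

theory Submission
  imports Defs
begin


lemma gstar_add: "gstar (a + b) = gstar a + gstar b"
  by transfer auto
lemma gstar_zero[simp]: "gstar 0 = 0" by transfer auto
lemma gstar_uminus: "gstar (- a) = - gstar (a::('g::group_add,'k::ab_group_add) group_alg)"
  by transfer auto
lemma gstar_diff: "gstar (a - b) = gstar a - gstar (b::('g::group_add,'k::ab_group_add) group_alg)"
  by transfer auto
lemma gstar_single: "gstar (Poly_Mapping.single g c) = Poly_Mapping.single (- g) c"
  by transfer (auto simp: when_def fun_eq_iff)
lemma gstar_gstar[simp]: "gstar (gstar a) = a" by transfer auto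

lemma pm_induct:
  assumes "P 0" "\<And>g c. P (Poly_Mapping.single g c)"
    "\<And>f h. P f \<Longrightarrow> P h \<Longrightarrow> P (f + h)"
  shows "P (f :: 'a \<Rightarrow>\<^sub>0 'b::monoid_add)"
proof (induct f rule: Poly_Mapping.update_induct)
  case const then show ?case using assms by simp
next
  case (update f a b)
  have "Poly_Mapping.update a b f = f + Poly_Mapping.single a b"
    using update(1)
    by (intro poly_mapping_eqI) (auto simp: lookup_update lookup_add lookup_single when_def in_keys_iff)
  then show ?case using assms update by simp
qed

lemma gstar_mult:
  fixes a b :: "('g::group_add,'k::comm_ring) group_alg"
  shows "gstar (a * b) = gstar b * gstar a"
proof (induct a rule: pm_induct)
  case 1 then show ?case by simp
next
  case (3 f h) then show ?case by (simp add: distrib_right distrib_left gstar_add)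
next
  case (2 g c)
  show ?case
  proof (induct b rule: pm_induct)
    case 1 then show ?case by simp
  next
    case (3 f h) then show ?case by (simp add: distrib_right distrib_left gstar_add)
  next
    case (2 g' c')
    then show ?case by (simp add: mult_single gstar_single minus_add mult.commute)
  qed
qed

lemma gstar_one[simp]: "gstar (1::('g::group_add,'k::comm_ring_1) group_alg) = 1"
  by (metis gstar_single single_one minus_zero)

lemma gstar_half[simp]: "gstar half = half"
  unfolding half_def by (simp add: gstar_single)

lemma half_half: "half + half = (1::('g::group_add,'k::field_char_0) group_alg)"
  unfolding half_def by (simp flip: single_add)



lemma I_uminus: "y \<in> sym_comm_ideal \<Longrightarrow> - y \<in> sym_comm_ideal"
  using sym_comm_ideal.lmult[of y "-1"] by simp
lemma I_diff: "x \<in> sym_comm_ideal \<Longrightarrow> y \<in> sym_comm_ideal \<Longrightarrow> x - y \<in> sym_comm_ideal"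
  using sym_comm_ideal.add[OF _ I_uminus, of x y] by simp

lemma I_gstar: "y \<in> sym_comm_ideal \<Longrightarrow> gstar y \<in> (sym_comm_ideal :: ('g::group_add,'k::field) group_alg set)"
proof (induct rule: sym_comm_ideal.induct)
  case (gen b a)
  have "gstar (a * b - b * a) = - (gstar a * b - b * gstar a)"
    using gen by (simp add: gstar_diff gstar_mult)
  then show ?case using I_uminus sym_comm_ideal.gen[OF gen] by metis
next
  case zero then show ?case by (simp add: sym_comm_ideal.zero)
next
  case (add x y) then show ?case by (simp add: gstar_add sym_comm_ideal.add)
next
  case (lmult y r) then show ?case by (simp add: gstar_mult sym_comm_ideal.rmult)
next
  case (rmult y r) then show ?case by (simp add: gstar_mult sym_comm_ideal.lmult)
qed

lemma AG_sym: "AG_eq x y \<Longrightarrow> AG_eq y x"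
proof (unfold AG_eq_def)
  assume "x - y \<in> sym_comm_ideal"
  then have "- (x - y) \<in> sym_comm_ideal" by (rule I_uminus)
  then show "y - x \<in> sym_comm_ideal" by simp
qed
lemma AG_trans: "AG_eq x y \<Longrightarrow> AG_eq y z \<Longrightarrow> AG_eq x z"
proof (unfold AG_eq_def)
  assume "x - y \<in> sym_comm_ideal" "y - z \<in> sym_comm_ideal"
  then have "(x - y) + (y - z) \<in> sym_comm_ideal" by (rule sym_comm_ideal.add)
  then show "x - z \<in> sym_comm_ideal" by simp
qed
lemma AG_equivp: "equivp AG_eq"
  by (rule equivpI) (auto intro: reflpI sympI transpI AG_sym AG_trans simp: AG_eq_def sym_comm_ideal.zero)

quotient_type (overloaded) ('g, 'k) ag = "('g::group_add, 'k::field) group_alg" / AG_eq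
  by (rule AG_equivp)

lemma AG_refl: "AG_eq a a" by (simp add: AG_eq_def sym_comm_ideal.zero)
lemma AG_of_eq: "a = b \<Longrightarrow> AG_eq a b" by (simp add: AG_refl)

instantiation ag :: (group_add, field) ring
begin
lift_definition zero_ag :: "('a,'b) ag" is 0 .
lift_definition plus_ag :: "('a,'b) ag \<Rightarrow> ('a,'b) ag \<Rightarrow> ('a,'b) ag" is "(+)"
  unfolding AG_eq_def
proof -
  fix x y z w :: "('a,'b) group_alg" assume "x - y \<in> sym_comm_ideal" "z - w \<in> sym_comm_ideal"
  then have "(x - y) + (z - w) \<in> sym_comm_ideal" by (rule sym_comm_ideal.add)
  then show "x + z - (y + w) \<in> sym_comm_ideal" by (simp add: algebra_simps)
qed
lift_definition uminus_ag :: "('a,'b) ag \<Rightarrow> ('a,'b) ag" is "uminus"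
  unfolding AG_eq_def
proof -
  fix x y :: "('a,'b) group_alg" assume "x - y \<in> sym_comm_ideal"
  then have "- (x - y) \<in> sym_comm_ideal" by (rule I_uminus)
  then show "- x - - y \<in> sym_comm_ideal" by (simp add: algebra_simps)
qed
lift_definition minus_ag :: "('a,'b) ag \<Rightarrow> ('a,'b) ag \<Rightarrow> ('a,'b) ag" is "(-)"
  unfolding AG_eq_def
proof -
  fix x y z w :: "('a,'b) group_alg" assume "x - y \<in> sym_comm_ideal" "z - w \<in> sym_comm_ideal"
  then have "(x - y) - (z - w) \<in> sym_comm_ideal" by (rule I_diff)
  then show "x - z - (y - w) \<in> sym_comm_ideal" by (simp add: algebra_simps)
qed
lift_definition times_ag :: "('a,'b) ag \<Rightarrow> ('a,'b) ag \<Rightarrow> ('a,'b) ag" is "(*)"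
proof -
  fix a a' b b' :: "('a,'b) group_alg"
  assume "AG_eq a a'" "AG_eq b b'"
  then have "(a - a') * b + a' * (b - b') \<in> sym_comm_ideal"
    unfolding AG_eq_def by (intro sym_comm_ideal.add sym_comm_ideal.lmult sym_comm_ideal.rmult)
  then show "AG_eq (a * b) (a' * b')" unfolding AG_eq_def by (simp add: algebra_simps)
qed
instance
proof
  fix a b c :: "('a,'b) ag"
  show "a * b * c = a * (b * c)"
    by (induct a rule: ag.abs_induct, induct b rule: ag.abs_induct, induct c rule: ag.abs_induct)
       (simp add: times_ag.abs_eq algebra_simps)
  show "(a + b) * c = a * c + b * c"
    by (induct a rule: ag.abs_induct, induct b rule: ag.abs_induct, induct c rule: ag.abs_induct)
       (simp add: times_ag.abs_eq plus_ag.abs_eq algebra_simps)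
  show "a * (b + c) = a * b + a * c"
    by (induct a rule: ag.abs_induct, induct b rule: ag.abs_induct, induct c rule: ag.abs_induct)
       (simp add: times_ag.abs_eq plus_ag.abs_eq algebra_simps)
  show "a + b + c = a + (b + c)"
    by (induct a rule: ag.abs_induct, induct b rule: ag.abs_induct, induct c rule: ag.abs_induct)
       (simp add: plus_ag.abs_eq algebra_simps)
  show "a + b = b + a"
    by (induct a rule: ag.abs_induct, induct b rule: ag.abs_induct)
       (simp add: plus_ag.abs_eq algebra_simps)
  show "0 + a = a"
    by (induct a rule: ag.abs_induct) (simp add: plus_ag.abs_eq zero_ag_def)
  show "- a + a = 0"
    by (induct a rule: ag.abs_induct) (simp add: plus_ag.abs_eq uminus_ag.abs_eq zero_ag_def)
  show "a - b = a + - b"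
    by (induct a rule: ag.abs_induct, induct b rule: ag.abs_induct)
       (simp add: plus_ag.abs_eq uminus_ag.abs_eq minus_ag.abs_eq)
qed
end

instantiation ag :: (group_add, field) monoid_mult
begin
lift_definition one_ag :: "('a,'b) ag" is 1 .
instance
proof
  fix a :: "('a,'b) ag"
  show "1 * a = a" by (induct a rule: ag.abs_induct) (simp add: times_ag.abs_eq one_ag_def)
  show "a * 1 = a" by (induct a rule: ag.abs_induct) (simp add: times_ag.abs_eq one_ag_def)
qed
end

lift_definition st :: "('g::group_add,'k::field) ag \<Rightarrow> ('g,'k) ag" is gstar
proof -
  fix x y :: "('g,'k) group_alg" assume "AG_eq x y"
  then have "gstar (x - y) \<in> sym_comm_ideal" unfolding AG_eq_def by (rule I_gstar)
  then show "AG_eq (gstar x) (gstar y)" unfolding AG_eq_def by (simp add: gstar_diff)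
qed
lift_definition hf :: "('g::group_add,'k::field) ag" is half .

lemma st_mult: "st (a * b) = st b * st a"
  by (induct a rule: ag.abs_induct, induct b rule: ag.abs_induct)
     (simp add: times_ag.abs_eq st.abs_eq gstar_mult)
lemma st_add: "st (a + b) = st a + st b"
  by (induct a rule: ag.abs_induct, induct b rule: ag.abs_induct)
     (simp add: plus_ag.abs_eq st.abs_eq gstar_add)
lemma st_st: "st (st a) = a"
  by (induct a rule: ag.abs_induct) (simp add: st.abs_eq)
lemma st_hf: "st hf = hf"
  by (simp add: st.abs_eq hf_def)
lemma hf_hf: "hf + hf = (1::('g::group_add,'k::field_char_0) ag)"
  by (simp add: hf_def plus_ag.abs_eq one_ag_def half_half)
lemma ring_aux: "a*(b+c) - (b+c)*a + (a*(b-c) - (b-c)*a) = (a*b - b*a) + (a*b-b*a :: 'a::ring)"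
  by (simp add: algebra_simps)

lemma st_central:
  fixes a b :: "('g::group_add,'k::field_char_0) ag"
  shows "st b = b \<Longrightarrow> a * b = b * a"
proof (induct a rule: ag.abs_induct, induct b rule: ag.abs_induct)
  fix a b :: "('g::group_add,'k::field_char_0) group_alg"
  assume "st (abs_ag b) = abs_ag b"
  then have d: "b - gstar b \<in> sym_comm_ideal"
    by (simp add: st.abs_eq ag.abs_eq_iff AG_eq_def) (metis I_uminus minus_diff_eq)
  have g: "a * (b + gstar b) - (b + gstar b) * a \<in> sym_comm_ideal"
    by (rule sym_comm_ideal.gen) (simp add: gstar_add add.commute)
  have "a * (b - gstar b) - (b - gstar b) * a \<in> sym_comm_ideal"
    by (rule I_diff[OF sym_comm_ideal.lmult[OF d] sym_comm_ideal.rmult[OF d]])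
  from sym_comm_ideal.add[OF g this]
  have "(a * b - b * a) + (a * b - b * a) \<in> sym_comm_ideal"
    by (simp only: ring_aux)
  then have "half * ((a * b - b * a) + (a * b - b * a)) \<in> sym_comm_ideal"
    by (rule sym_comm_ideal.lmult)
  moreover have "half * ((a * b - b * a) + (a * b - b * a)) = (a * b - b * a :: ('g,'k) group_alg)"
  proof -
    have "half * ((a * b - b * a) + (a * b - b * a)) = (half + half) * (a * b - b * a :: ('g,'k) group_alg)"
      by (simp only: distrib_left distrib_right)
    then show ?thesis by (simp add: half_half)
  qed
  ultimately show "abs_ag a * abs_ag b = abs_ag b * abs_ag a"
    by (simp add: times_ag.abs_eq ag.abs_eq_iff AG_eq_def)
qed



locale invr =
  fixes st :: "'a::{ring,monoid_mult} \<Rightarrow> 'a" and h :: 'a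
  assumes st_mult: "st (a*b) = st b * st a"
  and st_add: "st (a+b) = st a + st b"
  and st_st: "st (st a) = a"
  and central: "st b = b \<Longrightarrow> a*b = b*a"
  and st_h: "st h = h" and hh: "h + h = 1"
begin

lemma st_0[simp]: "st 0 = 0"
  using st_add[of 0 0] by simp
lemma st_minus: "st (- a) = - st a"
  using st_add[of "-a" a] by (simp add: eq_neg_iff_add_eq_0)
lemma st_diff: "st (a - b) = st a - st b"
  using st_add[of a "-b"] by (simp add: st_minus)

lemma h_comm: "a * h = h * a" using central[OF st_h] .
lemma h_left: "a * (h * b) = h * (a * b)"
  by (metis h_comm mult.assoc)
lemma two: "h * (a + a) = a"
proof -
  have "h * (a + a) = (h + h) * a" by (simp add: distrib_left distrib_right)
  then show ?thesis by (simp add: hh)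
qed
lemma cancel2: "u + u = v + v \<Longrightarrow> u = (v::'a)"
proof -
  assume "u + u = v + v"
  then have "h * (u + u) = h * (v + v)" by simp
  then show ?thesis by (simp add: two)
qed
lemma symskew0: "st k = k \<Longrightarrow> st k = - k \<Longrightarrow> k = 0"
proof -
  assume "st k = k" "st k = - k"
  then have "k = - k" by simp
  then have "k + k = 0 + 0" by (metis add.right_inverse add_0)
  then show ?thesis by (rule cancel2)
qed

definition dt where "dt x y = - (h * (x * y + y * x))"
definition br where "br x y = h * (x * y - y * x)"
definition skew where "skew x \<longleftrightarrow> st x = - x"

lemma sym_dt: "skew x \<Longrightarrow> skew y \<Longrightarrow> st (dt x y) = dt x y"
  unfolding dt_def skew_def
  by (simp add: st_minus st_add st_mult h_comm[of "_ + _"] st_h add.commute)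
lemma central_dt: "skew x \<Longrightarrow> skew y \<Longrightarrow> a * dt x y = dt x y * a"
  using central[OF sym_dt] by blast
lemma skew_br: "skew x \<Longrightarrow> skew y \<Longrightarrow> skew (br x y)"
proof -
  assume "skew x" "skew y"
  then have "st (x*y - y*x) = y*x - x*y" by (simp add: skew_def st_diff st_mult)
  then have "st (br x y) = (y*x - x*y) * h" by (simp add: br_def st_mult st_h)
  also have "\<dots> = h * (y*x - x*y)" by (rule h_comm)
  also have "\<dots> = - br x y" by (simp add: br_def algebra_simps)
  finally show ?thesis by (simp add: skew_def)
qed
lemma skew_neg: "skew x \<Longrightarrow> skew (- x)" by (simp add: skew_def st_minus)
lemma skew_add: "skew x \<Longrightarrow> skew y \<Longrightarrow> skew (x + y)" by (simp add: skew_def st_add)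
lemma skew_diff: "skew x \<Longrightarrow> skew y \<Longrightarrow> skew (x - y)" by (simp add: skew_def st_diff)
lemma skew_cmul: "st c = c \<Longrightarrow> skew x \<Longrightarrow> skew (c * x)"
  by (simp add: skew_def st_mult central)

lemma decomp: "x * y = - dt x y + br x y"
proof -
  have "- dt x y + br x y = h * ((x*y) + (x*y))"
    by (simp add: dt_def br_def algebra_simps)
  then show ?thesis by (simp add: two)
qed

lemma dt_comm: "dt x y = dt y x" by (simp add: dt_def add.commute)
lemma br_anti: "br x y = - br y x" by (simp add: br_def algebra_simps)
lemma dt_neg: "dt (- x) y = - dt x y" by (simp add: dt_def algebra_simps)
lemma dt_add: "dt (x + z) y = dt x y + dt z y" by (simp add: dt_def algebra_simps)
lemma dt_diff: "dt (x - z) y = dt x y - dt z y" by (simp add: dt_def algebra_simps)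
lemma dt_0: "dt 0 y = 0" by (simp add: dt_def)
lemma dt_cmul: "st c = c \<Longrightarrow> dt (c * x) y = c * dt x y"
proof -
  assume c: "st c = c"
  have "y * (c * x) = c * (y * x)" using central[OF c, of y] by (simp add: mult.assoc[symmetric])
  moreover have "h * c = c * h" using central[OF c] .
  ultimately show ?thesis by (simp add: dt_def algebra_simps) (metis mult.assoc)
qed

lemma br_br: "br (br x y) z = h * (h * ((x*y - y*x)*z - z*(x*y - y*x)))"
proof -
  define t where "t = x*y - y*x"
  have "br (br x y) z = h * ((h*t)*z - z*(h*t))" by (simp add: br_def t_def)
  also have "\<dots> = h * (h*(t*z) - h*(z*t))" by (simp only: mult.assoc h_left[of z t])
  also have "\<dots> = h * (h*(t*z - z*t))" by (simp add: right_diff_distrib)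
  finally show ?thesis by (simp add: t_def)
qed
lemma jacobi: "br (br x y) z + br (br y z) x + br (br z x) y = 0"
  unfolding br_br by (simp add: algebra_simps)

lemma split_st: "st A = A \<Longrightarrow> st B = - B \<Longrightarrow> st (A + B) = A - B"
  by (simp add: st_add)


lemma br_neg: "br (- a) b = - br a b" by (simp add: br_def algebra_simps)

lemma st_xyz: "skew x \<Longrightarrow> skew y \<Longrightarrow> skew z \<Longrightarrow> st (x*y*z) = - (z*y*x)"
  by (simp add: skew_def st_mult mult.assoc)

lemma xyz_decomp: "skew x \<Longrightarrow> skew y \<Longrightarrow> x*y*z = - dt (br x y) z + (-(dt x y * z) + br (br x y) z)"
proof -
  have "x*y*z = (- dt x y + br x y) * z" by (simp add: decomp[of x y])
  also have "\<dots> = -(dt x y * z) + br x y * z" by (simp add: algebra_simps)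
  also have "\<dots> = -(dt x y * z) + (- dt (br x y) z + br (br x y) z)" by (simp add: decomp[of "br x y" z])
  finally show ?thesis by (simp add: algebra_simps)
qed

lemma pair_solve:
  fixes A B A' B' :: 'a
  assumes e1: "A - B = - (A' + B')" and e2: "A' - B' = - (A + B)"
  shows "A + A' = 0" "B = B'"
proof -
  have f1: "A - B + (A' + B') = 0" using e1 by (simp add: eq_neg_iff_add_eq_0)
  have f2: "A' - B' + (A + B) = 0" using e2 by (simp add: eq_neg_iff_add_eq_0)
  have "(A + A') + (A + A') = (A - B + (A' + B')) + (A' - B' + (A + B))" by (simp add: algebra_simps)
  then have "(A + A') + (A + A') = 0 + 0" using f1 f2 by simp
  then show "A + A' = 0" by (rule cancel2)
  have "B + B = (A' - B' + (A + B)) - (A - B + (A' + B')) + (B' + B')" by (simp add: algebra_simps)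
  then have "B + B = B' + B'" using f1 f2 by simp
  then show "B = B'" by (rule cancel2)
qed

lemma triple:
  assumes x: "skew x" and y: "skew y" and z: "skew z"
  shows "dt (br x y) z = - dt (br z y) x"
    "-(dt x y * z) + br (br x y) z = -(dt z y * x) + br (br z y) x"
proof -
  define A where "A = - dt (br x y) z"
  define B where "B = -(dt x y * z) + br (br x y) z"
  define A' where "A' = - dt (br z y) x"
  define B' where "B' = -(dt z y * x) + br (br z y) x"
  have P: "x*y*z = A + B" unfolding A_def B_def by (rule xyz_decomp[OF x y])
  have P': "z*y*x = A' + B'" unfolding A'_def B'_def by (rule xyz_decomp[OF z y])
  have sA: "st A = A" unfolding A_def by (simp add: st_minus sym_dt skew_br x y z)
  have sA': "st A' = A'" unfolding A'_def by (simp add: st_minus sym_dt skew_br x y z)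
  have sB: "st B = - B" unfolding B_def
    using skew_add[OF skew_neg[OF skew_cmul[OF sym_dt[OF x y] z]] skew_br[OF skew_br[OF x y] z]]
    by (simp add: skew_def)
  have sB': "st B' = - B'" unfolding B'_def
    using skew_add[OF skew_neg[OF skew_cmul[OF sym_dt[OF z y] x]] skew_br[OF skew_br[OF z y] x]]
    by (simp add: skew_def)
  have e1: "A - B = - (A' + B')"
    using st_xyz[OF x y z] split_st[OF sA sB] P P' by simp
  have e2: "A' - B' = - (A + B)"
    using st_xyz[OF z y x] split_st[OF sA' sB'] P P' by simp
  from pair_solve[OF e1 e2] have "A = - A'" "B = B'" by (simp_all add: eq_neg_iff_add_eq_0)
  then show "dt (br x y) z = - dt (br z y) x" "-(dt x y * z) + br (br x y) z = -(dt z y * x) + br (br z y) x"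
    unfolding A_def A'_def B_def B'_def by (metis minus_minus, simp only:)
qed

definition T where "T x y z = dt (br x y) z"

lemma T_cyc: "skew x \<Longrightarrow> skew y \<Longrightarrow> skew z \<Longrightarrow> T x y z = T y z x"
  using triple(1)[of x y z] unfolding T_def
  by (simp add: br_anti[of z y] dt_neg)

lemma cross: "skew a \<Longrightarrow> skew b \<Longrightarrow> skew c \<Longrightarrow> br (br a b) c = dt c a * b - dt b c * a"
proof -
  assume a: "skew a" and b: "skew b" and c: "skew c"
  have BB: "-(dt b c * a) + br (br b c) a = -(dt a c * b) + br (br a c) b"
    by (rule triple(2)[OF b c a])
  have n: "br (br a c) b = - br (br c a) b" by (simp add: br_anti[of a c] br_neg)
  have jac: "br (br b c) a + br (br c a) b + br (br a b) c = 0" by (rule jacobi)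
  have "br (br a b) c - (dt c a * b - dt b c * a)
      = - (-(dt b c * a) + br (br b c) a - (-(dt a c * b) + br (br a c) b)) + (br (br b c) a + br (br c a) b + br (br a b) c)"
    by (simp add: n dt_comm[of a c] algebra_simps)
  moreover have q: "-(dt b c * a) + br (br b c) a - (-(dt a c * b) + br (br a c) b) = 0"
    by (simp only: BB diff_self)
  ultimately have "br (br a b) c - (dt c a * b - dt b c * a) = 0"
    unfolding q jac by simp
  then show ?thesis by simp
qed


lemma symT: "skew a \<Longrightarrow> skew b \<Longrightarrow> skew c \<Longrightarrow> st (T a b c) = T a b c"
  unfolding T_def by (rule sym_dt[OF skew_br])

lemma V:
  assumes x: "skew x" and y: "skew y" and z: "skew z" and w: "skew w"
  shows "T y z w * x - T x z w * y + T x y w * z - T x y z * w = 0"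
proof -
  have t1: "T x z w = dt (br z w) x"
    using T_cyc[OF z w x] T_cyc[OF w x z] by (simp add: T_def)
  have t2: "T y z w = dt y (br z w)"
    using T_cyc[OF y z w] by (simp add: T_def dt_comm)
  have t3: "T x y w = dt w (br x y)" by (simp add: T_def dt_comm)
  have e: "T x z w * y - T y z w * x = -(T x y z * w - T x y w * z)"
  proof -
    have "T x z w * y - T y z w * x = br (br x y) (br z w)"
      unfolding t1 t2 by (rule cross[OF x y skew_br[OF z w], symmetric])
    also have "\<dots> = - br (br z w) (br x y)" by (rule br_anti)
    also have "\<dots> = -(T x y z * w - T x y w * z)"
      unfolding T_def by (simp only: cross[OF z w skew_br[OF x y]] dt_comm[of w "br x y"])
    finally show ?thesis .
  qed
  have "T y z w * x - T x z w * y + T x y w * z - T x y z * w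
     = - (T x z w * y - T y z w * x) - (T x y z * w - T x y w * z)" by (simp add: algebra_simps)
  also have "\<dots> = 0" unfolding e by simp
  finally show ?thesis .
qed

lemma main_i:
  assumes x: "skew x" and y: "skew y" and z: "skew z" and w: "skew w"
  shows "T y z w * dt x u - T x z w * dt y u + T x y w * dt z u - T x y z * dt w u = 0"
proof -
  have "T y z w * dt x u - T x z w * dt y u + T x y w * dt z u - T x y z * dt w u
     = dt (T y z w * x - T x z w * y + T x y w * z - T x y z * w) u"
    by (simp add: dt_add dt_diff dt_cmul symT x y z w)
  also have "\<dots> = 0" by (simp add: V x y z w dt_0)
  finally show ?thesis .
qed

lemma BC:
  assumes a: "skew a" and b: "skew b" and u: "skew u" and v: "skew v"
  shows "T a b (br u v) = dt a u * dt b v - dt a v * dt b u"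
proof -
  have q: "skew (br u v)" by (rule skew_br[OF u v])
  have "T a b (br u v) = dt (br b (br u v)) a" using T_cyc[OF a b q] by (simp add: T_def)
  also have "br b (br u v) = - (dt b u * v - dt v b * u)"
    using br_anti[of b "br u v"] cross[OF u v b] by simp
  finally have "T a b (br u v) = - (dt b u * dt v a - dt v b * dt u a)"
    by (simp add: dt_neg dt_diff dt_cmul sym_dt b u v)
  moreover have "dt b u * dt v a = dt a v * dt b u"
    using central_dt[OF b u, of "dt v a"] dt_comm[of v a] by simp
  moreover have "dt v b * dt u a = dt a u * dt b v"
    using central_dt[OF a u, of "dt v b"] dt_comm[of v b] dt_comm[of u a] by simp
  ultimately show ?thesis by (simp add: algebra_simps)
qed

lemma main_ii:
  assumes x: "skew x" and y: "skew y" and z: "skew z" and u: "skew u" and v: "skew v" and w: "skew w"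
  shows "T x y z * T u v w = (dt y u * dt z v - dt y v * dt z u) * dt x w
      - (dt x u * dt z v - dt x v * dt z u) * dt y w + (dt x u * dt y v - dt x v * dt y u) * dt z w"
proof -
  define q where "q = br u v"
  have q: "skew q" unfolding q_def by (rule skew_br[OF u v])
  have "dt (T y z q * x - T x z q * y + T x y q * z - T x y z * q) w = 0"
    by (simp add: V x y z q dt_0)
  then have "T y z q * dt x w - T x z q * dt y w + T x y q * dt z w - T x y z * dt q w = 0"
    by (simp add: dt_add dt_diff dt_cmul symT x y z q)
  moreover have "dt q w = T u v w" by (simp add: q_def T_def)
  ultimately have "T x y z * T u v w = T y z q * dt x w - T x z q * dt y w + T x y q * dt z w"
    by (simp add: algebra_simps)
  then show ?thesis unfolding q_def by (simp add: BC x y z u v)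
qed

end

lemma det_central:
  fixes a11 a12 a13 a21 a22 a23 a31 a32 a33 :: "'a::ring"
  assumes c13: "\<And>t. a13 * t = t * a13" and c23: "\<And>t. a23 * t = t * a23" and c33: "\<And>t. a33 * t = t * a33"
  shows "det3 a11 a12 a13 a21 a22 a23 a31 a32 a33 =
     (a21 * a32 - a22 * a31) * a13 - (a11 * a32 - a12 * a31) * a23 + (a11 * a22 - a12 * a21) * a33"
proof -
  have "a21*(a32*a13) = a13*(a21*a32)" by (metis c13 mult.assoc)
  moreover have "a22*(a31*a13) = a13*(a22*a31)" by (metis c13 mult.assoc)
  moreover have "a11*(a32*a23) = a11*(a23*a32)" by (metis c23)
  moreover have "a12*(a31*a23) = a12*(a23*a31)" by (metis c23)
  ultimately show ?thesis by (simp add: det3_def algebra_simps)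
qed

interpretation AG: invr "st :: ('g::group_add,'k::field_char_0) ag \<Rightarrow> _" hf
  by standard (auto simp: st_mult st_add st_st st_hf hf_hf intro: st_central)

lemma abs_gdot: "abs_ag (gdot a b) = AG.dt (abs_ag a) (abs_ag (b :: ('g::group_add,'k::field_char_0) group_alg))"
  unfolding gdot_def AG.dt_def by (simp add: hf_def uminus_ag.abs_eq plus_ag.abs_eq times_ag.abs_eq)
lemma abs_gbr: "abs_ag (gbr a b) = AG.br (abs_ag a) (abs_ag (b :: ('g::group_add,'k::field_char_0) group_alg))"
  unfolding gbr_def AG.br_def by (simp add: hf_def minus_ag.abs_eq times_ag.abs_eq)
lemma abs_mult: "abs_ag (a * b) = abs_ag a * abs_ag b" by (simp add: times_ag.abs_eq)
lemma abs_add: "abs_ag (a + b) = abs_ag a + abs_ag b" by (simp add: plus_ag.abs_eq)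
lemma abs_diff: "abs_ag (a - b) = abs_ag a - abs_ag b" by (simp add: minus_ag.abs_eq)
lemma abs_det3: "abs_ag (det3 a11 a12 a13 a21 a22 a23 a31 a32 a33) =
   det3 (abs_ag a11) (abs_ag a12) (abs_ag a13) (abs_ag a21) (abs_ag a22) (abs_ag a23) (abs_ag a31) (abs_ag a32) (abs_ag a33)"
  by (simp add: det3_def abs_mult abs_add abs_diff)
lemma skew_of: "in_Lambda (x :: ('g::group_add,'k::field_char_0) group_alg) \<Longrightarrow> AG.skew (abs_ag x)"
  unfolding in_Lambda_def AG.skew_def
  by (simp add: st.abs_eq uminus_ag.abs_eq flip: ag.abs_eq_iff)

theorem mainTheorem8:
  fixes x y z u v w :: "('g::group_add, 'k::field_char_0) group_alg"
  assumes "in_Lambda x" and "in_Lambda y" and "in_Lambda z"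
    and "in_Lambda u" and "in_Lambda v" and "in_Lambda w"
  shows "AG_eq (gdot (gbr y z) w * gdot x u - gdot (gbr x z) w * gdot y u
              + gdot (gbr x y) w * gdot z u - gdot (gbr x y) z * gdot w u) 0
     \<and> AG_eq (gdot (gbr x y) z * gdot (gbr u v) w)
           (det3 (gdot x u) (gdot x v) (gdot x w)
                 (gdot y u) (gdot y v) (gdot y w)
                 (gdot z u) (gdot z v) (gdot z w))"
proof
  note sk = skew_of[OF assms(1)] skew_of[OF assms(2)] skew_of[OF assms(3)]
    skew_of[OF assms(4)] skew_of[OF assms(5)] skew_of[OF assms(6)]
  have c: "\<And>a b t. AG.skew a \<Longrightarrow> AG.skew b \<Longrightarrow> AG.dt a b * t = t * AG.dt a b"
    using AG.central_dt by metis
  show "AG_eq (gdot (gbr y z) w * gdot x u - gdot (gbr x z) w * gdot y u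
              + gdot (gbr x y) w * gdot z u - gdot (gbr x y) z * gdot w u) 0"
    unfolding ag.abs_eq_iff[symmetric] abs_mult abs_add abs_diff abs_gdot abs_gbr zero_ag_def[symmetric]
    using AG.main_i[OF sk(1) sk(2) sk(3) sk(6), of "abs_ag u", unfolded AG.T_def] .
  show "AG_eq (gdot (gbr x y) z * gdot (gbr u v) w)
           (det3 (gdot x u) (gdot x v) (gdot x w)
                 (gdot y u) (gdot y v) (gdot y w)
                 (gdot z u) (gdot z v) (gdot z w))"
    unfolding ag.abs_eq_iff[symmetric] abs_mult abs_det3 abs_gdot abs_gbr
    unfolding AG.main_ii[OF sk(1) sk(2) sk(3) sk(4) sk(5) sk(6), unfolded AG.T_def]
    by (rule sym, intro det_central c sk)
qed

end
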